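(* Let $\nu_0$ be a function on $\mathbb{Z}^d$ (initial mass configuration). If $T_1:[0,\tau_1]\to\mathbb{Z}^d$ and $T_2:[0,\tau_2]\to\mathbb{Z}^d$ are complete legal toppling functions for $\nu_0$, then $\mathcal{L}(T_1^{-1}(x))=\mathcal{L}(T_2^{-1}(x))$ for every $x\in\mathbb{Z}^d$. In particular $\tau_1=\tau_2$ and the final configurations $\nu_{\tau_1}$ (for $T_1$) and $\nu_{\tau_2}$ (for $T_2$) coincide.
   Context: $\mathcal{L}$ is Lebesgue measure on $\mathbb{R}$. The discrete Laplacian is $\Delta f(x)=\frac{1}{2d}\sum_{y\sim x}f(y)-f(x)$. A toppling function is a map $T:[0,\tau]\to\mathbb{Z}^d$ ($\tau>0$) with only finitely many discontinuities in $[0,t]$ for every $t<\tau$; $T(t)$ is the site toppled at time $t$. Its odometer at time $t$ is $u_t(x)=\mathcal{L}(T^{-1}(x)\cap[0,t])$ and the mass at time $t$ is $\nu_t=\nu_0+\Delta u_t$. $T$ is legal for $\nu_0$ if $\nu_t(T(t))\ge1$ for all $0\le t\le\tau$, and complete if moreover $\nu_\tau\le1$ everywhere. *)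

theory Defs
  imports "HOL-Analysis.Analysis"
begin

text \<open>Sites of Z^d are vectors of integers indexed by a finite type 'd (d = CARD('d)).\<close>

definition nbr :: "int ^ 'd::finite \<Rightarrow> int ^ 'd \<Rightarrow> bool" where
  "nbr x y \<longleftrightarrow> (\<Sum>i\<in>UNIV. \<bar>x $ i - y $ i\<bar>) = 1"

definition dlaplacian :: "(int ^ 'd::finite \<Rightarrow> real) \<Rightarrow> int ^ 'd \<Rightarrow> real" where
  "dlaplacian f x = (1 / (2 * real CARD('d))) * (\<Sum>y\<in>{y. nbr x y}. f y) - f x"

text \<open>T is discontinuous at s (relative to [0,tau]) iff it is not locally constant there
  (the codomain Z^d being discrete).\<close>
definition discont_at :: "(real \<Rightarrow> int ^ 'd::finite) \<Rightarrow> real \<Rightarrow> real \<Rightarrow> bool" where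
  "discont_at T tau s \<longleftrightarrow>
     \<not> (\<exists>e>0. \<forall>r\<in>{0..tau}. \<bar>r - s\<bar> < e \<longrightarrow> T r = T s)"

definition toppling_function :: "(real \<Rightarrow> int ^ 'd::finite) \<Rightarrow> real \<Rightarrow> bool" where
  "toppling_function T tau \<longleftrightarrow> tau > 0 \<and>
     (\<forall>t. 0 \<le> t \<and> t < tau \<longrightarrow> finite {s\<in>{0..t}. discont_at T tau s})"

definition odometer :: "(real \<Rightarrow> int ^ 'd::finite) \<Rightarrow> real \<Rightarrow> real \<Rightarrow> int ^ 'd \<Rightarrow> real" where
  "odometer T tau t x = measure lebesgue {s\<in>{0..tau}. T s = x \<and> s \<le> t}"

definition mass :: "(int ^ 'd::finite \<Rightarrow> real) \<Rightarrow> (real \<Rightarrow> int ^ 'd) \<Rightarrow> real \<Rightarrow> real \<Rightarrow> int ^ 'd \<Rightarrow> real" where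
  "mass nu0 T tau t x = nu0 x + dlaplacian (odometer T tau t) x"

definition legal :: "(int ^ 'd::finite \<Rightarrow> real) \<Rightarrow> (real \<Rightarrow> int ^ 'd) \<Rightarrow> real \<Rightarrow> bool" where
  "legal nu0 T tau \<longleftrightarrow> (\<forall>t\<in>{0..tau}. mass nu0 T tau t (T t) \<ge> 1)"

definition complete_toppling :: "(int ^ 'd::finite \<Rightarrow> real) \<Rightarrow> (real \<Rightarrow> int ^ 'd) \<Rightarrow> real \<Rightarrow> bool" where
  "complete_toppling nu0 T tau \<longleftrightarrow> legal nu0 T tau \<and> (\<forall>x. mass nu0 T tau tau x \<le> 1)"

end

theory Submission
  imports Defs
begin


lemma arch_aux: fixes tau s :: real assumes sp: "tau - s > 0"
  shows "\<exists>n::nat. s \<le> tau - tau/(real n+2)"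
proof -
  obtain n :: nat where n: "tau/(tau - s) < real n" using reals_Archimedean2 by blast
  have "tau < real n * (tau - s)" using n sp by (simp add: pos_divide_less_eq)
  also have "\<dots> \<le> (real n + 2) * (tau - s)" using sp by (intro mult_right_mono) auto
  finally have "tau/(real n + 2) < tau - s" by (simp add: pos_divide_less_eq mult.commute)
  then have "s \<le> tau - tau/(real n+2)" by simp
  then show ?thesis by blast
qed

lemma countable_aux: fixes A :: "nat \<Rightarrow> real set" assumes "\<And>n. finite (A n)"
  shows "countable ({t} \<union> (\<Union>n. A n))"
proof -
  have "countable (\<Union>n. A n)"
    by (rule countable_UN) (auto intro: countable_finite assms)
  then show ?thesis by simp
qed

lemma countable_disc:
  assumes "toppling_function T tau"
  shows "countable {s\<in>{0..tau}. discont_at T tau s}"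
proof -
  have tp: "tau > 0" using assms by (simp add: toppling_function_def)
  define A where "A = (\<lambda>n::nat. {s\<in>{0..tau - tau/(real n+2)}. discont_at T tau s})"
  have fin: "finite (A n)" for n
  proof -
    have a: "0 \<le> tau - tau/(real n+2)"
    proof -
      have "tau/(real n+2) \<le> tau/1" using tp by (intro divide_left_mono) auto
      then show ?thesis by simp
    qed
    have b: "tau - tau/(real n+2) < tau" using tp by simp
    have "\<forall>t. 0 \<le> t \<and> t < tau \<longrightarrow> finite {s\<in>{0..t}. discont_at T tau s}"
      using assms unfolding toppling_function_def by (elim conjE)
    then show ?thesis using a b unfolding A_def by blast
  qed
  have sub: "{s\<in>{0..tau}. discont_at T tau s} \<subseteq> {tau} \<union> (\<Union>n. A n)"
  proof
    fix s assume s: "s \<in> {s\<in>{0..tau}. discont_at T tau s}"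
    show "s \<in> {tau} \<union> (\<Union>n. A n)"
    proof (cases "s = tau")
      case True then show ?thesis by simp
    next
      case False
      then have sp: "tau - s > 0" using s by simp
      obtain n :: nat where "s \<le> tau - tau/(real n+2)" using arch_aux[OF sp] by blast
      then have "s \<in> A n" using s unfolding A_def by simp
      then show ?thesis by blast
    qed
  qed
  have "countable ({tau} \<union> (\<Union>n. A n))" using countable_aux fin by blast
  then show ?thesis using sub by (rule countable_subset[rotated])
qed

lemma meas:
  assumes "toppling_function T tau"
  shows "{s\<in>{0..tau}. T s = x} \<in> sets lebesgue"
proof -
  define P where "P = (\<lambda>s e. s\<in>{0..tau} \<and> T s = x \<and> e>0 \<and> (\<forall>r\<in>{0..tau}. \<bar>r - s\<bar> < e \<longrightarrow> T r = T s))"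
  define U where "U = (\<Union>(s,e)\<in>{(s,e). P s e}. ball s e)"
  have oU: "open U" unfolding U_def by (intro open_UN) auto
  define D where "D = {s\<in>{0..tau}. discont_at T tau s}"
  have cD: "countable D" using countable_disc[OF assms] by (simp add: D_def)
  have sub1: "{s\<in>{0..tau}. T s = x} \<subseteq> ({0..tau} \<inter> U) \<union> ({s\<in>{0..tau}. T s = x} \<inter> D)"
  proof
    fix r assume r: "r \<in> {s\<in>{0..tau}. T s = x}"
    show "r \<in> ({0..tau} \<inter> U) \<union> ({s\<in>{0..tau}. T s = x} \<inter> D)"
    proof (cases "discont_at T tau r")
      case True then show ?thesis using r by (simp add: D_def)
    next
      case False
      then obtain e where e: "e > 0" "\<forall>r'\<in>{0..tau}. \<bar>r' - r\<bar> < e \<longrightarrow> T r' = T r"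
        unfolding discont_at_def by blast
      have "P r e" using r e by (simp add: P_def)
      moreover have "r \<in> ball r e" using e by simp
      ultimately have "r \<in> U" unfolding U_def by blast
      then show ?thesis using r by blast
    qed
  qed
  have sub2: "{0..tau} \<inter> U \<subseteq> {s\<in>{0..tau}. T s = x}"
  proof
    fix r assume r: "r \<in> {0..tau} \<inter> U"
    then obtain s e where Pse: "P s e" and rb: "r \<in> ball s e" unfolding U_def by blast
    have "\<bar>r - s\<bar> < e" using rb by (simp add: dist_real_def abs_minus_commute)
    then have "T r = T s" using Pse r unfolding P_def by blast
    then show "r \<in> {s\<in>{0..tau}. T s = x}" using Pse r unfolding P_def by simp
  qed
  have eq: "{s\<in>{0..tau}. T s = x} = ({0..tau} \<inter> U) \<union> ({s\<in>{0..tau}. T s = x} \<inter> D)"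
    using sub1 sub2 by blast
  have "{0..tau} \<inter> U \<in> sets lebesgue" using oU by simp
  moreover have "{s\<in>{0..tau}. T s = x} \<inter> D \<in> sets lebesgue"
  proof -
    have "countable ({s\<in>{0..tau}. T s = x} \<inter> D)" using cD by (rule countable_subset[rotated]) auto
    then have "{s\<in>{0..tau}. T s = x} \<inter> D \<in> null_sets lebesgue"
      by (intro null_sets_completionI countable_imp_null_set_lborel)
    then show ?thesis by (rule null_setsD2)
  qed
  ultimately have "({0..tau} \<inter> U) \<union> ({s\<in>{0..tau}. T s = x} \<inter> D) \<in> sets lebesgue" by (rule sets.Un)
  then show ?thesis using eq by metis
qed

lemma meas_t:
  assumes "toppling_function T tau"
  shows "{s\<in>{0..tau}. T s = x \<and> s \<le> t} \<in> sets lebesgue"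
proof -
  have "{s\<in>{0..tau}. T s = x \<and> s \<le> t} = {s\<in>{0..tau}. T s = x} \<inter> {..t}" by auto
  moreover have "{..t} \<in> sets lebesgue" by simp
  ultimately show ?thesis using meas[OF assms, of x] by (metis sets.Int)
qed

lemma lmeas_t:
  assumes "toppling_function T tau"
  shows "{s\<in>{0..tau}. T s = x \<and> s \<le> t} \<in> lmeasurable"
  by (rule bounded_set_imp_lmeasurable[OF _ meas_t[OF assms]])
     (rule bounded_subset[of "{0..tau}"], auto)

lemma odo_lip:
  assumes "toppling_function T tau" "t \<le> t0"
  shows "odometer T tau t0 z \<le> odometer T tau t z + (t0 - t)"
proof -
  let ?A = "{s\<in>{0..tau}. T s = z \<and> s \<le> t}"
  let ?B = "{s\<in>{0..tau}. T s = z \<and> s \<le> t0}"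
  have sub: "?B \<subseteq> ?A \<union> {t<..t0}" by auto
  have "?A \<union> {t<..t0} \<in> lmeasurable"
  proof (rule fmeasurable.Un)
    show "?A \<in> lmeasurable" using lmeas_t[OF assms(1)] .
    show "{t<..t0} \<in> lmeasurable" by (rule bounded_set_imp_lmeasurable) auto
  qed
  then have "measure lebesgue ?B \<le> measure lebesgue (?A \<union> {t<..t0})"
    using sub meas_t[OF assms(1)] by (intro measure_mono_fmeasurable) auto
  also have "\<dots> \<le> measure lebesgue ?A + measure lebesgue {t<..t0}"
    using meas_t[OF assms(1)] by (intro measure_Un_le) auto
  also have "measure lebesgue {t<..t0} = t0 - t" using assms(2) by simp
  finally show ?thesis unfolding odometer_def by simp
qed

lemma nbr_irrefl: "\<not> nbr x x"
  by (simp add: nbr_def)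

lemma least_action:
  fixes nu0 :: "int ^ 'd::finite \<Rightarrow> real" and U :: "int ^ 'd \<Rightarrow> real"
  assumes tf: "toppling_function T tau" and lg: "legal nu0 T tau"
    and Ub: "\<And>x. nu0 x + dlaplacian U x \<le> 1" and Upos: "\<And>x. U x \<ge> 0"
  shows "odometer T tau tau x \<le> U x"
proof (rule ccontr)
  assume nle: "\<not> odometer T tau tau x \<le> U x"
  have tp: "tau > 0" using tf by (simp add: toppling_function_def)
  define E where "E = {t\<in>{0..tau}. \<exists>z. odometer T tau t z > U z}"
  have tauE: "tau \<in> E" using nle tp by (auto simp: E_def intro!: exI[of _ x])
  have Ene: "E \<noteq> {}" using tauE by auto
  have Ebdd: "bdd_below E" unfolding E_def by (rule bdd_belowI[of _ 0]) auto
  define t0 where "t0 = Inf E"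
  have t0le: "t0 \<le> e" if "e \<in> E" for e using cInf_lower[OF that Ebdd] by (simp add: t0_def)
  have t0nn: "0 \<le> t0" using cInf_greatest[OF Ene, of 0] by (auto simp: E_def t0_def)
  have t0tau: "t0 \<le> tau" using t0le[OF tauE] .
  have A: "odometer T tau t0 z \<le> U z" for z
  proof (rule ccontr)
    assume "\<not> odometer T tau t0 z \<le> U z"
    then have gt: "odometer T tau t0 z > U z" by simp
    show False
    proof (cases "t0 = 0")
      case True
      have "{s\<in>{0..tau}. T s = z \<and> s \<le> t0} \<subseteq> {0}" using True by auto
      then have "odometer T tau t0 z \<le> measure lebesgue {0::real}"
        unfolding odometer_def using meas_t[OF tf]
        by (intro measure_mono_fmeasurable) (auto intro: bounded_set_imp_lmeasurable)
      then have "odometer T tau t0 z \<le> 0" by simp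
      then show False using gt Upos[of z] by simp
    next
      case False
      define d where "d = odometer T tau t0 z - U z"
      have dp: "d > 0" using gt by (simp add: d_def)
      define t where "t = max 0 (t0 - d/2)"
      have tlt: "t < t0" using False t0nn dp by (simp add: t_def)
      have "t0 - t < d" using dp t0nn by (simp add: t_def)
      moreover have "odometer T tau t0 z \<le> odometer T tau t z + (t0 - t)"
        using odo_lip[OF tf] tlt by simp
      ultimately have "odometer T tau t z > U z" by (simp add: d_def)
      then have "t \<in> E" using tlt t0tau by (auto simp: E_def t_def)
      then show False using t0le tlt by fastforce
    qed
  qed
  have t0E: "t0 \<notin> E" using A by (auto simp: E_def not_less)
  have t0lt: "t0 < tau" using t0tau t0E tauE by (cases "t0 = tau") auto
  define t1 where "t1 = (t0 + tau) / 2"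
  have t1: "t0 < t1" "t1 < tau" using t0lt by (auto simp: t1_def)
  define F where "F = {s\<in>{0..t1}. discont_at T tau s}"
  have Ffin: "finite F" using tf t1 t0nn unfolding F_def toppling_function_def by auto
  define G where "G = insert (t1 - t0) ((\<lambda>s. s - t0) ` {s\<in>F. s > t0})"
  have Gfin: "finite G" using Ffin by (simp add: G_def)
  define eps where "eps = Min G"
  have epsp: "eps > 0" unfolding eps_def using Gfin t1
    by (subst Min_gr_iff) (auto simp: G_def)
  have epsle: "eps \<le> g" if "g \<in> G" for g using Gfin that by (simp add: eps_def)
  have nodisc: "\<not> discont_at T tau r" if r: "t0 < r" "r < t0 + eps" for r
  proof
    assume dc: "discont_at T tau r"
    have "eps \<le> t1 - t0" using epsle by (simp add: G_def)
    then have "r \<in> F" using r dc t0nn t1 by (auto simp: F_def)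
    then have "r - t0 \<in> G" using r by (auto simp: G_def)
    then show False using epsle r by fastforce
  qed
  have "Inf E < t0 + eps" using epsp by (simp add: t0_def)
  then obtain e where eE: "e \<in> E" and ee: "e < t0 + eps" using cInf_less_iff[OF Ene Ebdd] by blast
  have e0: "t0 < e" using t0le[OF eE] t0E eE by (cases "e = t0") auto
  have eps_tau: "t0 + eps \<le> tau"
  proof -
    have "eps \<le> t1 - t0" using epsle by (simp add: G_def)
    then show ?thesis using t1 by simp
  qed
  have const: "T r = T e" if r: "t0 < r" "r \<le> e" for r
  proof -
    have "T r = T e"
    proof (rule connected_local_const[where A="{t0<..<t0+eps}"])
      show "connected {t0<..<t0+eps}" by simp
      show "r \<in> {t0<..<t0+eps}" "e \<in> {t0<..<t0+eps}" using r ee e0 by auto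
      show "\<forall>a\<in>{t0<..<t0 + eps}. \<forall>\<^sub>F b in at a within {t0<..<t0 + eps}. T a = T b"
      proof
        fix a assume a: "a \<in> {t0<..<t0 + eps}"
        then have "\<not> discont_at T tau a" using nodisc by auto
        then obtain d where d: "d > 0" "\<forall>r\<in>{0..tau}. \<bar>r - a\<bar> < d \<longrightarrow> T r = T a"
          unfolding discont_at_def by blast
        show "\<forall>\<^sub>F b in at a within {t0<..<t0 + eps}. T a = T b"
          unfolding eventually_at
          using d t0nn eps_tau by (intro exI[of _ d]) (auto simp: dist_real_def)
      qed
    qed
    then show ?thesis .
  qed
  define y where "y = T e"
  have same: "odometer T tau e z = odometer T tau t0 z" if "z \<noteq> y" for z
  proof -
    have "{s\<in>{0..tau}. T s = z \<and> s \<le> e} = {s\<in>{0..tau}. T s = z \<and> s \<le> t0}"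
    proof (intro equalityI subsetI)
      fix s assume s: "s \<in> {s\<in>{0..tau}. T s = z \<and> s \<le> e}"
      show "s \<in> {s\<in>{0..tau}. T s = z \<and> s \<le> t0}"
      proof (rule ccontr)
        assume "s \<notin> {s\<in>{0..tau}. T s = z \<and> s \<le> t0}"
        then have "t0 < s" using s by auto
        then have "T s = T e" using s by (intro const) auto
        then show False using s that by (simp add: y_def)
      qed
    next
      fix s assume s: "s \<in> {s\<in>{0..tau}. T s = z \<and> s \<le> t0}"
      then show "s \<in> {s\<in>{0..tau}. T s = z \<and> s \<le> e}" using e0 by auto
    qed
    then show ?thesis by (simp add: odometer_def)
  qed
  from eE obtain z where z: "odometer T tau e z > U z" by (auto simp: E_def)
  have zy: "z = y" using same[of z] A[of z] z by (cases "z = y") auto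
  have eIn: "e \<in> {0..tau}" using eE by (auto simp: E_def)
  have "1 \<le> mass nu0 T tau e (T e)" using lg eIn by (simp add: legal_def)
  also have "\<dots> = nu0 y + (1 / (2 * real CARD('d))) * (\<Sum>w\<in>{w. nbr y w}. odometer T tau e w) - odometer T tau e y"
    by (simp add: mass_def dlaplacian_def y_def)
  also have "\<dots> < nu0 y + (1 / (2 * real CARD('d))) * (\<Sum>w\<in>{w. nbr y w}. U w) - U y"
  proof -
    have "(\<Sum>w\<in>{w. nbr y w}. odometer T tau e w) \<le> (\<Sum>w\<in>{w. nbr y w}. U w)"
    proof (rule sum_mono)
      fix w assume "w \<in> {w. nbr y w}"
      then have "w \<noteq> y" using nbr_irrefl by auto
      then show "odometer T tau e w \<le> U w" using same A by simp
    qed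
    then have "(1 / (2 * real CARD('d))) * (\<Sum>w\<in>{w. nbr y w}. odometer T tau e w) \<le> (1 / (2 * real CARD('d))) * (\<Sum>w\<in>{w. nbr y w}. U w)"
      by (intro mult_left_mono) auto
    then show ?thesis using z zy by simp
  qed
  also have "\<dots> = nu0 y + dlaplacian U y" by (simp add: dlaplacian_def)
  also have "\<dots> \<le> 1" using Ub .
  finally show False by simp
qed

lemma tau_sum:
  fixes T :: "real \<Rightarrow> int ^ 'd::finite"
  assumes tf: "toppling_function T tau"
  shows "ennreal tau = (\<integral>\<^sup>+x. ennreal (measure lebesgue {s\<in>{0..tau}. T s = x}) \<partial>count_space UNIV)"
proof -
  have tp: "tau > 0" using tf by (simp add: toppling_function_def)
  have U: "(\<Union>x\<in>UNIV. {s\<in>{0..tau}. T s = x}) = {0..tau}" by auto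
  have "emeasure lebesgue (\<Union>x\<in>UNIV. {s\<in>{0..tau}. T s = x})
        = (\<integral>\<^sup>+x. emeasure lebesgue {s\<in>{0..tau}. T s = x} \<partial>count_space UNIV)"
    by (rule emeasure_UN_countable, rule meas[OF tf]) (auto simp: disjoint_family_on_def)
  moreover have "emeasure lebesgue {0..tau} = ennreal tau" using tp by simp
  moreover have "emeasure lebesgue {s\<in>{0..tau}. T s = x} = ennreal (measure lebesgue {s\<in>{0..tau}. T s = x})" for x
  proof -
    have "{s\<in>{0..tau}. T s = x} = {s\<in>{0..tau}. T s = x \<and> s \<le> tau}" by auto
    then have "{s\<in>{0..tau}. T s = x} \<in> lmeasurable" using lmeas_t[OF tf, of x tau] by simp
    then show ?thesis by (rule emeasure_eq_measure2)
  qed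
  ultimately show ?thesis using U by simp
qed

theorem mainTheorem13:
  fixes nu0 :: "int ^ 'd::finite \<Rightarrow> real"
    and T1 T2 :: "real \<Rightarrow> int ^ 'd"
    and tau1 tau2 :: real
  assumes "toppling_function T1 tau1" and "toppling_function T2 tau2"
    and "complete_toppling nu0 T1 tau1" and "complete_toppling nu0 T2 tau2"
  shows "(\<forall>x. measure lebesgue {s\<in>{0..tau1}. T1 s = x} = measure lebesgue {s\<in>{0..tau2}. T2 s = x})
         \<and> tau1 = tau2
         \<and> mass nu0 T1 tau1 tau1 = mass nu0 T2 tau2 tau2"
proof -
  have le12: "odometer T1 tau1 tau1 x \<le> odometer T2 tau2 tau2 x" for x
  proof (rule least_action[of T1 tau1 nu0 "odometer T2 tau2 tau2"])
    show "toppling_function T1 tau1" using assms by simp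
    show "legal nu0 T1 tau1" using assms by (simp add: complete_toppling_def)
    show "nu0 y + dlaplacian (odometer T2 tau2 tau2) y \<le> 1" for y
      using assms by (simp add: complete_toppling_def mass_def)
    show "odometer T2 tau2 tau2 y \<ge> 0" for y by (simp add: odometer_def)
  qed
  have le21: "odometer T2 tau2 tau2 x \<le> odometer T1 tau1 tau1 x" for x
  proof (rule least_action[of T2 tau2 nu0 "odometer T1 tau1 tau1"])
    show "toppling_function T2 tau2" using assms by simp
    show "legal nu0 T2 tau2" using assms by (simp add: complete_toppling_def)
    show "nu0 y + dlaplacian (odometer T1 tau1 tau1) y \<le> 1" for y
      using assms by (simp add: complete_toppling_def mass_def)
    show "odometer T1 tau1 tau1 y \<ge> 0" for y by (simp add: odometer_def)
  qed
  have eqo: "odometer T1 tau1 tau1 = odometer T2 tau2 tau2"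
    using le12 le21 by (intro ext antisym) auto
  have S: "{s\<in>{0..tau}. T s = x \<and> s \<le> tau} = {s\<in>{0..tau}. T s = x}" for T :: "real \<Rightarrow> int ^ 'd" and tau x
    by auto
  have m: "\<forall>x. measure lebesgue {s\<in>{0..tau1}. T1 s = x} = measure lebesgue {s\<in>{0..tau2}. T2 s = x}"
    using eqo unfolding odometer_def S by metis
  have "ennreal tau1 = ennreal tau2"
    using tau_sum[OF assms(1)] tau_sum[OF assms(2)] m by simp
  moreover have "tau1 > 0" "tau2 > 0" using assms(1,2) by (auto simp: toppling_function_def)
  ultimately have "tau1 = tau2" by simp
  moreover have "mass nu0 T1 tau1 tau1 = mass nu0 T2 tau2 tau2"
    unfolding mass_def eqo by simp
  ultimately show ?thesis using m by blast
qed

end
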